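(* For every $\kappa$ with $0<|\kappa|<\delta_1$ there exists $\epsilon_2(\kappa)$, with $\lim_{\kappa\to0}\epsilon_2(\kappa)=0$, such that (i) $\|f'(U_\kappa)-f'(U_g)\|_\infty\le\epsilon_2(\kappa)$; (ii) $(1-\epsilon_2(\kappa))\,dV_g\le dV_{g^\kappa}\le(1+\epsilon_2(\kappa))\,dV_g$ on $I$; (iii) $(1-\epsilon_2(\kappa))|\nabla_g\phi^\kappa|^2\le|\nabla_{g^\kappa}\phi^\kappa|^2\le(1+\epsilon_2(\kappa))|\nabla_g\phi^\kappa|^2$ on $I$.
   Context: Let $l>0$ and $\Psi\in C^3([0,l])$ with $\Psi>0$ on $[0,l]$, $\Psi'(s)=\Psi'''(s)=0$ for $s\in\{0,l\}$, and $\Psi''\Psi-(\Psi')^2[1+(\Psi')^2]>0$ at some $s_0\in(0,l)$. Let $I=[0,l]\times S^1$. $D$ is the surface of revolution parametrized by $(s,\theta)\in I\mapsto(\Psi(s)\cos\theta,\Psi(s)\sin\theta,s)$, with metric $g=\mathrm{diag}(1+\Psi'(s)^2,\Psi(s)^2)$, area element $dV_g=\sqrt{|g|}\,ds\,d\theta$, gradient $\nabla_g$ (so $|\nabla_g u|^2=\frac{(\partial_s u)^2}{1+\Psi'^2}+\frac{(\partial_\theta u)^2}{\Psi^2}$) and Laplace–Beltrami operator $\Delta_g$. For $\kappa\neq0$, $M_\kappa$ is the surface parametrized by $(s,\theta)\in I\mapsto\big(\tfrac1\kappa(1-\cos\kappa s)+\Psi(s)\cos\theta\cos\kappa s,\ \Psi(s)\sin\theta,\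 \tfrac1\kappa\sin\kappa s-\Psi(s)\cos\theta\sin\kappa s\big)$, with metric $g^\kappa=\mathrm{diag}\big(\Psi'(s)^2+(\kappa\Psi(s)\cos\theta-1)^2,\Psi(s)^2\big)$, area element $dV_{g^\kappa}=\sqrt{|g^\kappa|}\,ds\,d\theta$, gradient $\nabla_{g^\kappa}$ (so $|\nabla_{g^\kappa} u|^2=\frac{(\partial_s u)^2}{\Psi'^2+(\kappa\Psi\cos\theta-1)^2}+\frac{(\partial_\theta u)^2}{\Psi^2}$) and Laplace–Beltrami operator $\Delta_{g^\kappa}$; $\delta_0>0$ is such that for $0<|\kappa|\le\delta_0$, $M_\kappa$ is a properly embedded surface with boundary the circles $s=0,s=l$ and outward unit normal $\nu$. Functions on $D$, $M_\kappa$ are identified with functions on $I$. Bandle, Punzo and Tesei constructed $f\in C^1(\mathbb{R})$ and a pattern (stable nonconstant stationary solution) $U_g=U_g(s)$ of the Neumann problem $\partial_t u=\Delta_g u+f(u)$ in $D$, $\partial u/\partial\nu=0$ on $\partial D$, whose linearization has positive principal eigenvalue; $f$, $U_g$ denote these. Fix $0<\alpha<1$; $\delta_1\in(0,\delta_0)$ and, for $0<|\kappa|<\delta_1$, $U_\kappa$ is a stationary solution of the Neumann problem on $M_\kappa$ ($\Delta_{g^\kappa}U_\kappa+f(U_\kappa)=0$ in $M_\kappa$, $\partial U_\kappa/\partial\nu=0$ on $\partial M_\kappa$) with $\|U_\kappa-U_g\|_{C^{2,\alpha}(I)}<\epsilon_1(\kappa)$ where $\epsilon_1(\kappa)\to0$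 as $\kappa\to0$. For such $\kappa$, $\lambda_1^\kappa=\inf_{0\ne q\in H^1(M_\kappa)}\frac{\int_{M_\kappa}(|\nabla_{g^\kappa}q|^2-f'(U_\kappa)q^2)\,dV_{g^\kappa}}{\int_{M_\kappa}q^2\,dV_{g^\kappa}}$ is the principal eigenvalue and $\phi^\kappa\in H^1$ the corresponding eigenfunction: $\Delta_{g^\kappa}\phi^\kappa+f'(U_\kappa)\phi^\kappa=-\lambda_1^\kappa\phi^\kappa$ in $M_\kappa$, $\phi^\kappa>0$, $\|\phi^\kappa\|_{L^2(M_\kappa)}=1$, $\partial\phi^\kappa/\partial\nu=0$ on $\partial M_\kappa$. *)

theory Defs
  imports "HOL-Analysis.Analysis"
begin

text \<open>Functions on I = [0,l] x S^1 are represented as functions real x real => real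
  that are 2 pi-periodic in the second variable theta.\<close>

type_synonym fn2 = "real \<times> real \<Rightarrow> real"
type_synonym metric = "fn2 \<times> fn2"  \<comment> \<open>diagonal metric: (g_ss, g_thth)\<close>

definition Iset :: "real \<Rightarrow> (real \<times> real) set" where
  "Iset l = {0..l} \<times> (UNIV :: real set)"

definition Ibox :: "real \<Rightarrow> (real \<times> real) set" where
  "Ibox l = cbox (0,0) (l, 2*pi)"

definition theta_periodic :: "fn2 \<Rightarrow> bool" where
  "theta_periodic u \<longleftrightarrow> (\<forall>s \<theta>. u (s, \<theta> + 2*pi) = u (s, \<theta>))"

definition d1 :: "real \<Rightarrow> (real \<Rightarrow> real) \<Rightarrow> real \<Rightarrow> real" where
  "d1 l h s = vector_derivative h (at s within {0..l})"

fun Ck_on :: "nat \<Rightarrow> real \<Rightarrow> (real \<Rightarrow> real) \<Rightarrow> bool" where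
  "Ck_on 0 l h = continuous_on {0..l} h"
| "Ck_on (Suc k) l h = ((\<forall>s\<in>{0..l}. h differentiable (at s within {0..l}))
      \<and> continuous_on {0..l} h \<and> Ck_on k l (d1 l h))"

definition ps :: "real \<Rightarrow> fn2 \<Rightarrow> fn2" where
  "ps l u = (\<lambda>(s, \<theta>). vector_derivative (\<lambda>t. u (t, \<theta>)) (at s within {0..l}))"

definition pt :: "fn2 \<Rightarrow> fn2" where
  "pt u = (\<lambda>(s, \<theta>). vector_derivative (\<lambda>t. u (s, t)) (at \<theta>))"

definition C1_I :: "real \<Rightarrow> fn2 \<Rightarrow> bool" where
  "C1_I l u \<longleftrightarrow> theta_periodic u \<and> continuous_on (Iset l) u \<and>
     (\<forall>s\<in>{0..l}. \<forall>\<theta>. (\<lambda>t. u (t, \<theta>)) differentiable (at s within {0..l})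
                     \<and> (\<lambda>t. u (s, t)) differentiable (at \<theta>)) \<and>
     continuous_on (Iset l) (ps l u) \<and> continuous_on (Iset l) (pt u)"

definition C2_I :: "real \<Rightarrow> fn2 \<Rightarrow> bool" where
  "C2_I l u \<longleftrightarrow> C1_I l u \<and> C1_I l (ps l u) \<and> C1_I l (pt u)"

definition supn :: "real \<Rightarrow> fn2 \<Rightarrow> real" where
  "supn l u = Sup ((\<lambda>x. \<bar>u x\<bar>) ` Iset l)"

definition hoelder_quot :: "real \<Rightarrow> real \<Rightarrow> fn2 \<Rightarrow> real set" where
  "hoelder_quot l \<alpha> v = {\<bar>v x - v y\<bar> / (dist x y powr \<alpha>) | x y. x \<in> Iset l \<and> y \<in> Iset l \<and> x \<noteq> y}"

definition second_derivs :: "real \<Rightarrow> fn2 \<Rightarrow> fn2 list" where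
  "second_derivs l u = [ps l (ps l u), pt (ps l u), ps l (pt u), pt (pt u)]"

definition C2a_I :: "real \<Rightarrow> real \<Rightarrow> fn2 \<Rightarrow> bool" where
  "C2a_I l \<alpha> u \<longleftrightarrow> C2_I l u \<and> (\<forall>v\<in>set (second_derivs l u). bdd_above (hoelder_quot l \<alpha> v))"

definition c2a_norm :: "real \<Rightarrow> real \<Rightarrow> fn2 \<Rightarrow> real" where
  "c2a_norm l \<alpha> u =
     sum_list (map (supn l) ([u, ps l u, pt u] @ second_derivs l u))
     + sum_list (map (\<lambda>v. Sup (hoelder_quot l \<alpha> v)) (second_derivs l u))"

definition gD :: "real \<Rightarrow> (real \<Rightarrow> real) \<Rightarrow> metric" where
  "gD l \<Psi> = ((\<lambda>(s, \<theta>). 1 + (d1 l \<Psi> s)\<^sup>2), (\<lambda>(s, \<theta>). (\<Psi> s)\<^sup>2))"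

definition gK :: "real \<Rightarrow> (real \<Rightarrow> real) \<Rightarrow> real \<Rightarrow> metric" where
  "gK l \<Psi> \<kappa> = ((\<lambda>(s, \<theta>). (d1 l \<Psi> s)\<^sup>2 + (\<kappa> * \<Psi> s * cos \<theta> - 1)\<^sup>2), (\<lambda>(s, \<theta>). (\<Psi> s)\<^sup>2))"

definition dens :: "metric \<Rightarrow> fn2" where
  "dens g x = sqrt (fst g x * snd g x)"

text \<open>|grad_g u|^2 in terms of the (classical or weak) partial derivatives us, ut of u.\<close>
definition gradsq :: "metric \<Rightarrow> fn2 \<Rightarrow> fn2 \<Rightarrow> fn2" where
  "gradsq g us ut x = (us x)\<^sup>2 / fst g x + (ut x)\<^sup>2 / snd g x"

definition LB :: "real \<Rightarrow> metric \<Rightarrow> fn2 \<Rightarrow> fn2" where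
  "LB l g u x = (ps l (\<lambda>y. dens g y / fst g y * ps l u y) x
                 + pt (\<lambda>y. dens g y / snd g y * pt u y) x) / dens g x"

text \<open>Outward normal derivative at the boundary circles s = 0 and s = l.\<close>
definition normal_deriv :: "real \<Rightarrow> metric \<Rightarrow> fn2 \<Rightarrow> fn2" where
  "normal_deriv l g u x = (if fst x = 0 then -1 else 1) * ps l u x / sqrt (fst g x)"

definition test_fn :: "real \<Rightarrow> fn2 \<Rightarrow> bool" where
  "test_fn l q \<longleftrightarrow> C1_I l q \<and> (\<exists>a b. 0 < a \<and> b < l \<and> (\<forall>x\<in>Iset l. fst x \<notin> {a..b} \<longrightarrow> q x = 0))"

definition weak_partials :: "real \<Rightarrow> fn2 \<Rightarrow> fn2 \<Rightarrow> fn2 \<Rightarrow> bool" where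
  "weak_partials l u us ut \<longleftrightarrow> (\<forall>q. test_fn l q \<longrightarrow>
     integral (Ibox l) (\<lambda>x. u x * ps l q x) = - integral (Ibox l) (\<lambda>x. us x * q x) \<and>
     integral (Ibox l) (\<lambda>x. u x * pt q x) = - integral (Ibox l) (\<lambda>x. ut x * q x))"

definition H1 :: "real \<Rightarrow> metric \<Rightarrow> fn2 \<Rightarrow> fn2 \<Rightarrow> fn2 \<Rightarrow> bool" where
  "H1 l g u us ut \<longleftrightarrow> theta_periodic u \<and> theta_periodic us \<and> theta_periodic ut \<and>
     u measurable_on Ibox l \<and> us measurable_on Ibox l \<and> ut measurable_on Ibox l \<and>
     (\<lambda>x. (u x)\<^sup>2 * dens g x) integrable_on Ibox l \<and>
     (\<lambda>x. gradsq g us ut x * dens g x) integrable_on Ibox l \<and>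
     weak_partials l u us ut"

definition rayleigh :: "real \<Rightarrow> metric \<Rightarrow> fn2 \<Rightarrow> fn2 \<Rightarrow> fn2 \<Rightarrow> fn2 \<Rightarrow> real" where
  "rayleigh l g V u us ut =
     integral (Ibox l) (\<lambda>x. (gradsq g us ut x - V x * (u x)\<^sup>2) * dens g x)
     / integral (Ibox l) (\<lambda>x. (u x)\<^sup>2 * dens g x)"

text \<open>Principal eigenvalue of  -Delta_g - V  with Neumann conditions.\<close>
definition lam1 :: "real \<Rightarrow> metric \<Rightarrow> fn2 \<Rightarrow> real" where
  "lam1 l g V = Inf {rayleigh l g V u us ut | u us ut.
       H1 l g u us ut \<and> integral (Ibox l) (\<lambda>x. (u x)\<^sup>2 * dens g x) \<noteq> 0}"

definition weak_eigen :: "real \<Rightarrow> metric \<Rightarrow> fn2 \<Rightarrow> real \<Rightarrow> fn2 \<Rightarrow> fn2 \<Rightarrow> fn2 \<Rightarrow> bool" where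
  "weak_eigen l g V lam \<phi> \<phi>s \<phi>t \<longleftrightarrow> H1 l g \<phi> \<phi>s \<phi>t \<and>
     (\<forall>q qs qt. H1 l g q qs qt \<longrightarrow>
        integral (Ibox l) (\<lambda>x. (\<phi>s x * qs x / fst g x + \<phi>t x * qt x / snd g x
                                - V x * \<phi> x * q x) * dens g x)
        = lam * integral (Ibox l) (\<lambda>x. \<phi> x * q x * dens g x))"

definition Xk :: "(real \<Rightarrow> real) \<Rightarrow> real \<Rightarrow> real \<times> real \<Rightarrow> real \<times> real \<times> real" where
  "Xk \<Psi> \<kappa> = (\<lambda>(s, \<theta>). (1/\<kappa> * (1 - cos (\<kappa> * s)) + \<Psi> s * cos \<theta> * cos (\<kappa> * s),
                        \<Psi> s * sin \<theta>,
                        1/\<kappa> * sin (\<kappa> * s) - \<Psi> s * cos \<theta> * sin (\<kappa> * s)))"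

end

theory Submission
  imports Defs
begin

lemma bsq:
  fixes a P M k c :: real
  assumes "0 < P" "P \<le> M" "\<bar>c\<bar> \<le> 1"
  shows "\<bar>(k*P*c - 1)\<^sup>2 - 1\<bar> \<le> \<bar>k\<bar>*M*(2+\<bar>k\<bar>*M)"
proof -
  have h1: "\<bar>k*P*c\<bar> \<le> \<bar>k\<bar>*M"
  proof -
    have "\<bar>k*P*c\<bar> = \<bar>k\<bar>*P*\<bar>c\<bar>" using assms by (simp add: abs_mult)
    also have "\<dots> \<le> \<bar>k\<bar>*M*1" using assms by (intro mult_mono) auto
    finally show ?thesis by simp
  qed
  have "(k*P*c - 1)\<^sup>2 - 1 = (k*P*c) * (k*P*c - 2)" by (simp add: power2_eq_square algebra_simps)
  hence "\<bar>(k*P*c - 1)\<^sup>2 - 1\<bar> = \<bar>k*P*c\<bar> * \<bar>k*P*c - 2\<bar>" by (simp add: abs_mult)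
  also have "\<dots> \<le> (\<bar>k\<bar>*M) * (2+\<bar>k\<bar>*M)"
    using h1 by (intro mult_mono) auto
  finally show ?thesis by simp
qed

lemma dens_ineq:
  fixes a P b \<eta> :: real
  assumes "0 \<le> a" "0 < P" "\<bar>b\<^sup>2 - 1\<bar> \<le> \<eta>"
  shows "(1-\<eta>)* sqrt((1+a)*P\<^sup>2) \<le> sqrt((a+b\<^sup>2)*P\<^sup>2) \<and> sqrt((a+b\<^sup>2)*P\<^sup>2) \<le> (1+\<eta>)* sqrt((1+a)*P\<^sup>2)"
proof
  have e0: "0 \<le> \<eta>" using assms(3) by linarith
  have sD: "sqrt((1+a)*P\<^sup>2) = sqrt(1+a) * P" using assms by (simp add: real_sqrt_mult)
  have sK: "sqrt((a+b\<^sup>2)*P\<^sup>2) = sqrt(a+b\<^sup>2) * P" using assms by (simp add: real_sqrt_mult)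
  show "(1-\<eta>)* sqrt((1+a)*P\<^sup>2) \<le> sqrt((a+b\<^sup>2)*P\<^sup>2)"
  proof (cases "\<eta> \<le> 1")
    case False
    have "0 \<le> sqrt((1+a)*P\<^sup>2)" using assms by simp
    hence "(1-\<eta>)* sqrt((1+a)*P\<^sup>2) \<le> 0" using False by (intro mult_nonpos_nonneg) auto
    moreover have "0 \<le> sqrt((a+b\<^sup>2)*P\<^sup>2)" using assms by simp
    ultimately show ?thesis by linarith
  next
    case True
    have "(1-\<eta>)\<^sup>2*(1+a) \<le> (1-\<eta>)*(1+a)"
      using True e0 assms by (intro mult_right_mono) (auto simp: power2_eq_square mult_left_le)
    also have "\<dots> \<le> a + b\<^sup>2"
    proof -
      have "1 - b\<^sup>2 \<le> \<eta>" using abs_le_D2[OF assms(3)] by simp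
      moreover have "0 \<le> \<eta>*a" using e0 assms by simp
      moreover have "(1-\<eta>)*(1+a) = 1 + a - \<eta> - \<eta>*a" by (simp add: algebra_simps)
      ultimately show ?thesis by linarith
    qed
    finally have "sqrt((1-\<eta>)\<^sup>2*(1+a)) \<le> sqrt(a+b\<^sup>2)" by simp
    hence "(1-\<eta>)* sqrt(1+a) \<le> sqrt(a+b\<^sup>2)" using True by (simp add: real_sqrt_mult)
    then show ?thesis unfolding sD sK using assms
      by (metis mult.assoc mult_right_mono less_imp_le)
  qed
  show "sqrt((a+b\<^sup>2)*P\<^sup>2) \<le> (1+\<eta>)* sqrt((1+a)*P\<^sup>2)"
  proof -
    have "a + b\<^sup>2 \<le> (1+\<eta>)*(1+a)"
    proof -
      have "b\<^sup>2 - 1 \<le> \<eta>" using abs_le_D1[OF assms(3)] by simp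
      moreover have "0 \<le> \<eta>*a" using e0 assms by simp
      moreover have "(1+\<eta>)*(1+a) = 1 + a + \<eta> + \<eta>*a" by (simp add: algebra_simps)
      ultimately show ?thesis by linarith
    qed
    also have "\<dots> \<le> (1+\<eta>)\<^sup>2*(1+a)"
      using e0 assms by (intro mult_right_mono) (auto simp: power2_eq_square)
    finally have "sqrt(a+b\<^sup>2) \<le> sqrt((1+\<eta>)\<^sup>2*(1+a))" by simp
    hence "sqrt(a+b\<^sup>2) \<le> (1+\<eta>)* sqrt(1+a)" using e0 by (simp add: real_sqrt_mult)
    then show ?thesis unfolding sD sK using assms
      by (metis mult.assoc mult_right_mono less_imp_le)
  qed
qed

lemma grad_lower:
  fixes a P b \<eta> u t :: real
  assumes "0 \<le> a" "0 < P" "\<bar>b\<^sup>2 - 1\<bar> \<le> \<eta>" "0 < a + b\<^sup>2"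
  shows "(1-\<eta>)*(u\<^sup>2/(1+a) + t\<^sup>2/P\<^sup>2) \<le> u\<^sup>2/(a+b\<^sup>2) + t\<^sup>2/P\<^sup>2"
proof -
  have e0: "0 \<le> \<eta>" using assms(3) by linarith
  have X0: "0 \<le> t\<^sup>2/P\<^sup>2" by simp
  have T: "(1-\<eta>)*(t\<^sup>2/P\<^sup>2) \<le> t\<^sup>2/P\<^sup>2" using mult_nonneg_nonneg[OF e0 X0] by (simp only: left_diff_distrib mult_1_left)
  have "(1-\<eta>)*(u\<^sup>2/(1+a)) \<le> u\<^sup>2/(a+b\<^sup>2)"
  proof (cases "\<eta> \<le> 1")
    case False
    have "(1-\<eta>)*(u\<^sup>2/(1+a)) \<le> 0" using False assms by (intro mult_nonpos_nonneg) auto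
    moreover have "0 \<le> u\<^sup>2/(a+b\<^sup>2)" using assms(4) by simp
    ultimately show ?thesis by linarith
  next
    case True
    have key: "(1-\<eta>)*(a+b\<^sup>2) \<le> 1+a"
    proof (cases "b\<^sup>2 \<le> 1")
      case True
      have "0 \<le> \<eta>*(a+b\<^sup>2)" using e0 assms(4) by simp
      moreover have "(1-\<eta>)*(a+b\<^sup>2) = a + b\<^sup>2 - \<eta>*(a+b\<^sup>2)" by (simp add: algebra_simps)
      ultimately show ?thesis using True by linarith
    next
      case False
      have "\<eta>*1 \<le> \<eta>*b\<^sup>2" using False e0 by (intro mult_left_mono) auto
      moreover have "b\<^sup>2 - 1 \<le> \<eta>" using abs_le_D1[OF assms(3)] by simp
      moreover have "0 \<le> \<eta>*a" using e0 assms by simp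
      moreover have "(1-\<eta>)*(a+b\<^sup>2) = a + b\<^sup>2 - \<eta>*a - \<eta>*b\<^sup>2" by (simp add: algebra_simps)
      ultimately show ?thesis by linarith
    qed
    have pa: "0 < 1 + a" using assms by simp
    have r1: "1-\<eta> \<le> (1+a)/(a+b\<^sup>2)" using key assms(4) by (simp add: pos_le_divide_eq)
    have "(1-\<eta>)/(1+a) \<le> ((1+a)/(a+b\<^sup>2))/(1+a)" using r1 pa by (intro divide_right_mono) auto
    also have "\<dots> = 1/(a+b\<^sup>2)" using pa by simp
    finally have r2: "(1-\<eta>)/(1+a) \<le> 1/(a+b\<^sup>2)" .
    have "u\<^sup>2*((1-\<eta>)/(1+a)) \<le> u\<^sup>2*(1/(a+b\<^sup>2))" using r2 by (intro mult_left_mono) auto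
    moreover have "(1-\<eta>)*(u\<^sup>2/(1+a)) = u\<^sup>2*((1-\<eta>)/(1+a))" by (simp add: mult.commute)
    ultimately show ?thesis by (simp add: mult.commute)
  qed
  then show ?thesis using T by (simp add: distrib_left)
qed

lemma grad_upper_gen:
  fixes a P B e u t :: real
  assumes "0 \<le> a" "0 < P" "0 < B" "0 \<le> e" "1 + a \<le> (1+e)*B"
  shows "u\<^sup>2/B + t\<^sup>2/P\<^sup>2 \<le> (1+e)*(u\<^sup>2/(1+a) + t\<^sup>2/P\<^sup>2)"
proof -
  have X0: "0 \<le> t\<^sup>2/P\<^sup>2" by simp
  have T: "t\<^sup>2/P\<^sup>2 \<le> (1+e)*(t\<^sup>2/P\<^sup>2)" using mult_nonneg_nonneg[OF assms(4) X0] by (simp only: distrib_right mult_1_left)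
  have pa: "0 < 1 + a" using assms by auto
  have r: "1 \<le> (1+e)*B/(1+a)" using pa assms by (simp add: le_divide_eq)
  have "u\<^sup>2*1 \<le> u\<^sup>2*((1+e)*B/(1+a))" by (rule mult_left_mono[OF r]) simp
  hence "u\<^sup>2 \<le> u\<^sup>2*((1+e)*B/(1+a))" by simp
  also have "\<dots> = ((1+e)*(u\<^sup>2/(1+a)))*B" by simp
  finally have "u\<^sup>2/B \<le> (1+e)*(u\<^sup>2/(1+a))" using assms by (simp add: pos_divide_le_eq)
  then show ?thesis using T by (simp add: distrib_left)
qed

lemma per_int:
  fixes v :: fn2
  assumes "\<forall>\<theta>. v (s, \<theta> + 2*pi) = v (s, \<theta>)"
  shows "v (s, \<theta> + 2*pi* of_int k) = v (s, \<theta>)"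
proof (induction k rule: int_induct[where k=0])
  case base then show ?case by simp
next
  case (step1 i)
  have "v (s, \<theta> + 2*pi* of_int (i+1)) = v (s, (\<theta> + 2*pi* of_int i) + 2*pi)"
    by (simp add: algebra_simps)
  also have "\<dots> = v (s, \<theta> + 2*pi* of_int i)" using assms by blast
  finally show ?case using step1 by simp
next
  case (step2 i)
  have "v (s, \<theta> + 2*pi* of_int i) = v (s, (\<theta> + 2*pi* of_int (i-1)) + 2*pi)"
    by (simp add: algebra_simps)
  also have "\<dots> = v (s, \<theta> + 2*pi* of_int (i-1))" using assms by blast
  finally show ?case using step2 by simp
qed

lemma bdd_per:
  fixes v :: fn2
  assumes "continuous_on (Iset l) v" "theta_periodic v"
  shows "\<exists>B. \<forall>x\<in>Iset l. \<bar>v x\<bar> \<le> B"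
proof -
  let ?K = "{0..l} \<times> {0..2*pi}"
  have Ks: "?K \<subseteq> Iset l" unfolding Iset_def by auto
  have "compact (v ` ?K)"
    by (intro compact_continuous_image continuous_on_subset[OF assms(1) Ks] compact_Times compact_Icc)
  then obtain B where B: "\<forall>y\<in>v ` ?K. norm y \<le> B" using compact_imp_bounded bounded_iff by metis
  have "\<bar>v x\<bar> \<le> B" if x: "x \<in> Iset l" for x
  proof -
    obtain s \<theta> where xs: "x = (s, \<theta>)" by (cases x)
    define k where "k = \<lfloor>\<theta> / (2*pi)\<rfloor>"
    define \<theta>' where "\<theta>' = \<theta> - 2*pi* of_int k"
    have f1: "of_int k \<le> \<theta> / (2*pi)" "\<theta> / (2*pi) < of_int k + 1"
      unfolding k_def by linarith+
    have "2*pi* of_int k \<le> \<theta>" using f1(1) pi_gt_zero by (simp add: field_simps)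
    moreover have "\<theta> < 2*pi*(of_int k + 1)" using f1(2) pi_gt_zero by (simp add: field_simps)
    ultimately have t': "0 \<le> \<theta>'" "\<theta>' \<le> 2*pi" unfolding \<theta>'_def by (auto simp: algebra_simps)
    have per: "\<forall>\<theta>. v (s, \<theta> + 2*pi) = v (s, \<theta>)" using assms(2) unfolding theta_periodic_def by blast
    have "v (s, \<theta>) = v (s, \<theta>' + 2*pi* of_int k)" unfolding \<theta>'_def by simp
    also have "\<dots> = v (s, \<theta>')" by (rule per_int[OF per])
    finally have "v x = v (s, \<theta>')" using xs by simp
    moreover have "(s, \<theta>') \<in> ?K" using x xs t' unfolding Iset_def by auto
    ultimately show ?thesis using B by auto
  qed
  then show ?thesis by blast
qed

lemma supn_props:
  fixes v :: fn2
  assumes "continuous_on (Iset l) v" "theta_periodic v" "0 \<le> l"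
  shows "0 \<le> supn l v \<and> (\<forall>x\<in>Iset l. \<bar>v x\<bar> \<le> supn l v)"
proof -
  obtain B where B: "\<forall>x\<in>Iset l. \<bar>v x\<bar> \<le> B" using bdd_per[OF assms(1,2)] by blast
  have bdd: "bdd_above ((\<lambda>x. \<bar>v x\<bar>) ` Iset l)" using B by (auto intro: bdd_aboveI2)
  have mem: "(0,0) \<in> Iset l" using assms unfolding Iset_def by auto
  have up: "\<forall>x\<in>Iset l. \<bar>v x\<bar> \<le> supn l v" unfolding supn_def using bdd by (auto intro: cSup_upper)
  have "0 \<le> supn l v" using up mem by (meson abs_ge_zero order_trans)
  with up show ?thesis by blast
qed

lemma ps_per: "theta_periodic v \<Longrightarrow> theta_periodic (ps l v)"
  unfolding theta_periodic_def ps_def by simp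

lemma pt_per:
  assumes "theta_periodic v"
  shows "theta_periodic (pt v)"
  unfolding theta_periodic_def
proof (intro allI)
  fix s \<theta>
  let ?h = "\<lambda>t. v (s, t)"
  have hh: "(\<lambda>x. ?h (x + 2*pi)) = ?h" using assms unfolding theta_periodic_def by simp
  have "\<And>D. (?h has_vector_derivative D) (at (\<theta> + 2*pi)) = (?h has_vector_derivative D) (at \<theta>)"
    using DERIV_shift[of ?h _ \<theta> "2*pi"] hh
    by (simp add: has_real_derivative_iff_has_vector_derivative[symmetric])
  then show "pt v (s, \<theta> + 2*pi) = pt v (s, \<theta>)"
    unfolding pt_def vector_derivative_def by simp
qed

lemma hq_nonneg:
  assumes "bdd_above (hoelder_quot l \<alpha> v)" "0 < l"
  shows "0 \<le> Sup (hoelder_quot l \<alpha> v)"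
proof -
  have "(0,0) \<in> Iset l" "(0,1) \<in> Iset l" using assms unfolding Iset_def by auto
  hence "\<bar>v (0,0) - v (0,1)\<bar> / (dist (0::real,0::real) (0,1) powr \<alpha>) \<in> hoelder_quot l \<alpha> v"
    unfolding hoelder_quot_def by fastforce
  from cSup_upper2[OF this _ assms(1), of 0] show ?thesis by simp
qed

lemma c2a_bound:
  assumes "C2a_I l \<alpha> u" "0 < l"
  shows "\<forall>x\<in>Iset l. \<bar>u x\<bar> \<le> c2a_norm l \<alpha> u"
proof -
  have c2: "C1_I l u" "C1_I l (ps l u)" "C1_I l (pt u)" and hb: "\<forall>v\<in>set (second_derivs l u). bdd_above (hoelder_quot l \<alpha> v)"
    using assms unfolding C2a_I_def C2_I_def by auto
  have l0: "0 \<le> l" using assms by simp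
  note C1 = c2[unfolded C1_I_def]
  have s1: "0 \<le> supn l u \<and> (\<forall>x\<in>Iset l. \<bar>u x\<bar> \<le> supn l u)" using C1(1) supn_props l0 by blast
  have s2: "0 \<le> supn l (ps l u)" using C1(2) supn_props l0 by blast
  have s3: "0 \<le> supn l (pt u)" using C1(3) supn_props l0 by blast
  have s4: "0 \<le> supn l (ps l (ps l u))" using C1(2) supn_props l0 ps_per by blast
  have s5: "0 \<le> supn l (pt (ps l u))" using C1(2) supn_props l0 pt_per by blast
  have s6: "0 \<le> supn l (ps l (pt u))" using C1(3) supn_props l0 ps_per by blast
  have s7: "0 \<le> supn l (pt (pt u))" using C1(3) supn_props l0 pt_per by blast
  have h: "0 \<le> Sup (hoelder_quot l \<alpha> v)" if "v \<in> set (second_derivs l u)" for v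
    using hb that hq_nonneg assms(2) by blast
  have h4: "0 \<le> Sup (hoelder_quot l \<alpha> (ps l (ps l u)))" "0 \<le> Sup (hoelder_quot l \<alpha> (pt (ps l u)))"
     "0 \<le> Sup (hoelder_quot l \<alpha> (ps l (pt u)))" "0 \<le> Sup (hoelder_quot l \<alpha> (pt (pt u)))"
    by (auto intro!: h simp: second_derivs_def)
  show ?thesis unfolding c2a_norm_def second_derivs_def
    using s1 s2 s3 s4 s5 s6 s7 h4 by auto
qed

lemma mono_lo: "0 \<le> (X::real) \<Longrightarrow> e \<le> e' \<Longrightarrow> (1-e)*X \<le> Y \<Longrightarrow> (1-e')*X \<le> Y"
proof -
  assume a: "0 \<le> X" "e \<le> e'" "(1-e)*X \<le> Y"
  have "(1-e')*X \<le> (1-e)*X" using a by (intro mult_right_mono) auto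
  then show ?thesis using a(3) by linarith
qed

lemma mono_hi: "0 \<le> (X::real) \<Longrightarrow> e \<le> e' \<Longrightarrow> Y \<le> (1+e)*X \<Longrightarrow> Y \<le> (1+e')*X"
proof -
  assume a: "0 \<le> X" "e \<le> e'" "Y \<le> (1+e)*X"
  have "(1+e)*X \<le> (1+e')*X" using a by (intro mult_right_mono) auto
  then show ?thesis using a(3) by linarith
qed

lemma small_case:
  fixes a P M k c :: real
  assumes "0 \<le> a" "0 < P" "P \<le> M" "\<bar>c\<bar> \<le> 1" "\<bar>k\<bar>*M \<le> 1/2"
  shows "1 + a \<le> (1 + 4*(\<bar>k\<bar>*M*(2+\<bar>k\<bar>*M)))*(a + (k*P*c-1)\<^sup>2)"
proof -
  define \<eta> where "\<eta> = \<bar>k\<bar>*M*(2+\<bar>k\<bar>*M)"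
  define b where "b = k*P*c-1"
  have bs: "\<bar>b\<^sup>2 - 1\<bar> \<le> \<eta>" unfolding b_def \<eta>_def by (rule bsq[OF assms(2-4)])
  have e0: "0 \<le> \<eta>" using bs by linarith
  have h1: "\<bar>k*P*c\<bar> \<le> \<bar>k\<bar>*M"
  proof -
    have "\<bar>k*P*c\<bar> = \<bar>k\<bar>*P*\<bar>c\<bar>" using assms by (simp add: abs_mult)
    also have "\<dots> \<le> \<bar>k\<bar>*M*1" using assms by (intro mult_mono) auto
    finally show ?thesis by simp
  qed
  have "1/2 \<le> 1 - k*P*c" using h1 assms(5) by linarith
  hence "(1/2)\<^sup>2 \<le> (1 - k*P*c)\<^sup>2" by (intro power_mono) auto
  hence "(1/2)\<^sup>2 \<le> (k*P*c - 1)\<^sup>2" by (metis power2_commute)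
  hence b4: "1/4 \<le> b\<^sup>2" unfolding b_def by (simp add: power_divide)
  have "\<eta> * (1/4) \<le> \<eta> * b\<^sup>2" using b4 e0 by (intro mult_left_mono)
  moreover have "0 \<le> \<eta> * a" using e0 assms by simp
  moreover have "(1+4*\<eta>)*(a+b\<^sup>2) = a + b\<^sup>2 + 4*(\<eta>*a) + 4*(\<eta>*b\<^sup>2)" by (simp add: algebra_simps)
  ultimately have "1 + a \<le> (1+4*\<eta>)*(a+b\<^sup>2)" using bs by linarith
  then show ?thesis unfolding \<eta>_def b_def .
qed

lemma unf:
  "gradsq (gK l \<Psi> \<kappa>) us ut (s,\<theta>) = (us (s,\<theta>))\<^sup>2/((d1 l \<Psi> s)\<^sup>2 + (\<kappa>*\<Psi> s*cos \<theta> - 1)\<^sup>2) + (ut (s,\<theta>))\<^sup>2/(\<Psi> s)\<^sup>2"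
  "gradsq (gD l \<Psi>) us ut (s,\<theta>) = (us (s,\<theta>))\<^sup>2/(1 + (d1 l \<Psi> s)\<^sup>2) + (ut (s,\<theta>))\<^sup>2/(\<Psi> s)\<^sup>2"
  "dens (gK l \<Psi> \<kappa>) (s,\<theta>) = sqrt(((d1 l \<Psi> s)\<^sup>2 + (\<kappa>*\<Psi> s*cos \<theta> - 1)\<^sup>2) * (\<Psi> s)\<^sup>2)"
  "dens (gD l \<Psi>) (s,\<theta>) = sqrt((1 + (d1 l \<Psi> s)\<^sup>2) * (\<Psi> s)\<^sup>2)"
  "fst (gK l \<Psi> \<kappa>) (s,\<theta>) = (d1 l \<Psi> s)\<^sup>2 + (\<kappa>*\<Psi> s*cos \<theta> - 1)\<^sup>2"
  by (simp_all add: gradsq_def gK_def gD_def dens_def)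

theorem lemma4p3:
  fixes l :: real and \<Psi> :: "real \<Rightarrow> real"
    and f f' :: "real \<Rightarrow> real" and Ug :: "real \<Rightarrow> real"
    and \<alpha> \<delta>0 \<delta>1 :: real and \<epsilon>1 :: "real \<Rightarrow> real"
    and U \<phi> \<phi>s \<phi>t :: "real \<Rightarrow> real \<times> real \<Rightarrow> real"
  assumes l_pos: "l > 0"
    and Psi_C3: "Ck_on 3 l \<Psi>"
    and Psi_pos: "\<forall>s\<in>{0..l}. \<Psi> s > 0"
    and Psi_bd1: "d1 l \<Psi> 0 = 0" "d1 l \<Psi> l = 0"
    and Psi_bd3: "d1 l (d1 l (d1 l \<Psi>)) 0 = 0" "d1 l (d1 l (d1 l \<Psi>)) l = 0"
    and Psi_s0: "\<exists>s0\<in>{0<..<l}. d1 l (d1 l \<Psi>) s0 * \<Psi> s0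
                    - (d1 l \<Psi> s0)\<^sup>2 * (1 + (d1 l \<Psi> s0)\<^sup>2) > 0"
    and delta0: "\<delta>0 > 0"
    and embedded: "\<forall>\<kappa>. 0 < \<bar>\<kappa>\<bar> \<and> \<bar>\<kappa>\<bar> \<le> \<delta>0 \<longrightarrow>
                     inj_on (Xk \<Psi> \<kappa>) ({0..l} \<times> {0..<2*pi}) \<and>
                     (\<forall>x\<in>Iset l. fst (gK l \<Psi> \<kappa>) x > 0)"
    and f_C1: "\<forall>x. (f has_real_derivative f' x) (at x)" "continuous_on UNIV f'"
    and Ug_C2: "C2_I l (\<lambda>x. Ug (fst x))"
    and Ug_eq: "\<forall>x\<in>Iset l. LB l (gD l \<Psi>) (\<lambda>y. Ug (fst y)) x + f (Ug (fst x)) = 0"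
    and Ug_neu: "\<forall>\<theta>. normal_deriv l (gD l \<Psi>) (\<lambda>y. Ug (fst y)) (0, \<theta>) = 0
                    \<and> normal_deriv l (gD l \<Psi>) (\<lambda>y. Ug (fst y)) (l, \<theta>) = 0"
    and Ug_nonconst: "\<exists>s\<in>{0..l}. \<exists>t\<in>{0..l}. Ug s \<noteq> Ug t"
    and Ug_stable: "lam1 l (gD l \<Psi>) (\<lambda>x. f' (Ug (fst x))) > 0"
    and alpha: "0 < \<alpha>" "\<alpha> < 1"
    and delta1: "0 < \<delta>1" "\<delta>1 < \<delta>0"
    and eps1_lim: "(\<epsilon>1 \<longlongrightarrow> 0) (at 0)"
    and U_C2: "\<forall>\<kappa>. 0 < \<bar>\<kappa>\<bar> \<and> \<bar>\<kappa>\<bar> < \<delta>1 \<longrightarrow> C2_I l (U \<kappa>)"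
    and U_eq: "\<forall>\<kappa>. 0 < \<bar>\<kappa>\<bar> \<and> \<bar>\<kappa>\<bar> < \<delta>1 \<longrightarrow>
                 (\<forall>x\<in>Iset l. LB l (gK l \<Psi> \<kappa>) (U \<kappa>) x + f (U \<kappa> x) = 0)"
    and U_neu: "\<forall>\<kappa>. 0 < \<bar>\<kappa>\<bar> \<and> \<bar>\<kappa>\<bar> < \<delta>1 \<longrightarrow>
                 (\<forall>\<theta>. normal_deriv l (gK l \<Psi> \<kappa>) (U \<kappa>) (0, \<theta>) = 0
                     \<and> normal_deriv l (gK l \<Psi> \<kappa>) (U \<kappa>) (l, \<theta>) = 0)"
    and U_close: "\<forall>\<kappa>. 0 < \<bar>\<kappa>\<bar> \<and> \<bar>\<kappa>\<bar> < \<delta>1 \<longrightarrow>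
                 C2a_I l \<alpha> (\<lambda>x. U \<kappa> x - Ug (fst x)) \<and>
                 c2a_norm l \<alpha> (\<lambda>x. U \<kappa> x - Ug (fst x)) < \<epsilon>1 \<kappa>"
    and phi_eigen: "\<forall>\<kappa>. 0 < \<bar>\<kappa>\<bar> \<and> \<bar>\<kappa>\<bar> < \<delta>1 \<longrightarrow>
                 weak_eigen l (gK l \<Psi> \<kappa>) (\<lambda>x. f' (U \<kappa> x))
                    (lam1 l (gK l \<Psi> \<kappa>) (\<lambda>x. f' (U \<kappa> x))) (\<phi> \<kappa>) (\<phi>s \<kappa>) (\<phi>t \<kappa>)"
    and phi_pos: "\<forall>\<kappa>. 0 < \<bar>\<kappa>\<bar> \<and> \<bar>\<kappa>\<bar> < \<delta>1 \<longrightarrow> (\<forall>x\<in>Iset l. \<phi> \<kappa> x > 0)"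
    and phi_norm: "\<forall>\<kappa>. 0 < \<bar>\<kappa>\<bar> \<and> \<bar>\<kappa>\<bar> < \<delta>1 \<longrightarrow>
                 integral (Ibox l) (\<lambda>x. (\<phi> \<kappa> x)\<^sup>2 * dens (gK l \<Psi> \<kappa>) x) = 1"
  shows "\<exists>\<epsilon>2 :: real \<Rightarrow> real. (\<epsilon>2 \<longlongrightarrow> 0) (at 0) \<and>
     (\<forall>\<kappa>. 0 < \<bar>\<kappa>\<bar> \<and> \<bar>\<kappa>\<bar> < \<delta>1 \<longrightarrow>
        (\<forall>x\<in>Iset l. \<bar>f' (U \<kappa> x) - f' (Ug (fst x))\<bar> \<le> \<epsilon>2 \<kappa>) \<and>
        (\<forall>x\<in>Iset l. (1 - \<epsilon>2 \<kappa>) * dens (gD l \<Psi>) x \<le> dens (gK l \<Psi> \<kappa>) x \<and>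
                    dens (gK l \<Psi> \<kappa>) x \<le> (1 + \<epsilon>2 \<kappa>) * dens (gD l \<Psi>) x) \<and>
        (\<forall>x\<in>Iset l.
           (1 - \<epsilon>2 \<kappa>) * gradsq (gD l \<Psi>) (\<phi>s \<kappa>) (\<phi>t \<kappa>) x
              \<le> gradsq (gK l \<Psi> \<kappa>) (\<phi>s \<kappa>) (\<phi>t \<kappa>) x \<and>
           gradsq (gK l \<Psi> \<kappa>) (\<phi>s \<kappa>) (\<phi>t \<kappa>) x
              \<le> (1 + \<epsilon>2 \<kappa>) * gradsq (gD l \<Psi>) (\<phi>s \<kappa>) (\<phi>t \<kappa>) x))"
proof -
  have C3: "Ck_on (Suc (Suc (Suc 0))) l \<Psi>" using Psi_C3 by (simp add: numeral_3_eq_3)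
  have cPsi: "continuous_on {0..l} \<Psi>" and cd1: "continuous_on {0..l} (d1 l \<Psi>)"
    using C3 by auto
  obtain s1 where s1: "s1 \<in> {0..l}" "\<forall>s\<in>{0..l}. \<Psi> s \<le> \<Psi> s1"
    using continuous_attains_sup[OF compact_Icc _ cPsi] l_pos by auto
  define M where "M = \<Psi> s1"
  have Mb: "\<forall>s\<in>{0..l}. \<Psi> s \<le> M" and M0: "0 < M" using s1 Psi_pos M_def by auto
  define R where "R = (\<lambda>\<kappa>::real. 0 < \<bar>\<kappa>\<bar> \<and> \<bar>\<kappa>\<bar> < \<delta>1)"
  define \<eta> where "\<eta> = (\<lambda>\<kappa>::real. \<bar>\<kappa>\<bar>*M*(2+\<bar>\<kappa>\<bar>*M))"
  define D where "D = (\<lambda>\<kappa> x. \<bar>f' (U \<kappa> x) - f' (Ug (fst x))\<bar>)"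
  define E1 where "E1 = (\<lambda>\<kappa>. if R \<kappa> then Sup (D \<kappa> ` Iset l) else 0)"
  define Q where "Q = (\<lambda>\<kappa> e. 0 \<le> e \<and> (\<forall>x\<in>Iset l. gradsq (gK l \<Psi> \<kappa>) (\<phi>s \<kappa>) (\<phi>t \<kappa>) x
                       \<le> (1 + e) * gradsq (gD l \<Psi>) (\<phi>s \<kappa>) (\<phi>t \<kappa>) x))"
  define L where "L = (\<lambda>\<kappa>. if R \<kappa> \<and> \<bar>\<kappa>\<bar>*M > 1/2 then (SOME e. Q \<kappa> e) else 0)"
  define \<epsilon>2 where "\<epsilon>2 = (\<lambda>\<kappa>. max (E1 \<kappa>) (max (4*\<eta> \<kappa>) (L \<kappa>)))"
  have mem0: "(0,0) \<in> Iset l" using l_pos unfolding Iset_def by auto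
  have UgC: "continuous_on (Iset l) (\<lambda>x. Ug (fst x))" using Ug_C2 unfolding C2_I_def C1_I_def by blast
  have Ugper: "theta_periodic (\<lambda>x. Ug (fst x))" unfolding theta_periodic_def by simp
  define B0 where "B0 = supn l (\<lambda>x. Ug (fst x))"
  have B0: "\<forall>x\<in>Iset l. \<bar>Ug (fst x)\<bar> \<le> B0" using supn_props[OF UgC Ugper] l_pos B0_def by auto
  have close: "\<bar>U \<kappa> x - Ug (fst x)\<bar> < \<epsilon>1 \<kappa>" if "R \<kappa>" "x \<in> Iset l" for \<kappa> x
  proof -
    have c: "C2a_I l \<alpha> (\<lambda>x. U \<kappa> x - Ug (fst x))" "c2a_norm l \<alpha> (\<lambda>x. U \<kappa> x - Ug (fst x)) < \<epsilon>1 \<kappa>"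
      using U_close that unfolding R_def by auto
    from c2a_bound[OF c(1) l_pos] that(2) c(2) show ?thesis by fastforce
  qed
  have E1: "\<forall>x\<in>Iset l. D \<kappa> x \<le> E1 \<kappa>" "0 \<le> E1 \<kappa>" if "R \<kappa>" for \<kappa>
  proof -
    let ?r = "B0 + \<bar>\<epsilon>1 \<kappa>\<bar>"
    have "bounded (f' ` {-?r..?r})"
      by (intro compact_imp_bounded compact_continuous_image continuous_on_subset[OF f_C1(2)]) auto
    then obtain F where "\<forall>z\<in>f' ` {-?r..?r}. norm z \<le> F" unfolding bounded_iff by blast
    hence F: "\<forall>y\<in>{-?r..?r}. \<bar>f' y\<bar> \<le> F" by auto
    have Db: "D \<kappa> x \<le> 2*F" if x: "x \<in> Iset l" for x
    proof -
      have "U \<kappa> x \<in> {-?r..?r}" "Ug (fst x) \<in> {-?r..?r}" using close[OF \<open>R \<kappa>\<close> x] B0 x by auto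
      then have "\<bar>f' (U \<kappa> x)\<bar> \<le> F" "\<bar>f' (Ug (fst x))\<bar> \<le> F" using F by auto
      then show ?thesis unfolding D_def by arith
    qed
    have bdd: "bdd_above (D \<kappa> ` Iset l)" by (rule bdd_aboveI2, rule Db)
    show "\<forall>x\<in>Iset l. D \<kappa> x \<le> E1 \<kappa>" using bdd that unfolding E1_def by (auto intro: cSup_upper)
    have "D \<kappa> (0,0) \<in> D \<kappa> ` Iset l" using mem0 by blast
    from cSup_upper2[OF this _ bdd, of 0] show "0 \<le> E1 \<kappa>" using that unfolding E1_def D_def by simp
  qed
  have E1lim: "(E1 \<longlongrightarrow> 0) (at 0)"
  proof (rule tendstoI)
    fix e :: real assume e: "0 < e"
    let ?C = "{-(B0+1)..B0+1}"
    have uc: "uniformly_continuous_on ?C f'"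
      by (intro compact_uniformly_continuous continuous_on_subset[OF f_C1(2)]) auto
    have e2: "0 < e/2" using e by simp
    have "\<exists>d>0. \<forall>x\<in>?C. \<forall>x'\<in>?C. dist x' x < d \<longrightarrow> dist (f' x') (f' x) < e/2"
      using uc[unfolded uniformly_continuous_on_def, rule_format, OF e2] .
    then obtain d where d: "d > 0" "\<forall>x\<in>?C. \<forall>x'\<in>?C. dist x' x < d \<longrightarrow> dist (f' x') (f' x) < e/2"
      by blast
    have ev1: "eventually (\<lambda>\<kappa>. dist (\<epsilon>1 \<kappa>) 0 < min d 1) (at 0)"
      using eps1_lim d(1) by (intro tendstoD) auto
    have ev2: "eventually R (at (0::real))" unfolding R_def eventually_at
      using delta1(1) by (auto intro!: exI[of _ \<delta>1])
    show "eventually (\<lambda>\<kappa>. dist (E1 \<kappa>) 0 < e) (at 0)"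
      using ev1 ev2
    proof eventually_elim
      case (elim \<kappa>)
      have "D \<kappa> x \<le> e/2" if x: "x \<in> Iset l" for x
      proof -
        have c: "\<bar>U \<kappa> x - Ug (fst x)\<bar> < min d 1" using close[OF elim(2) x] elim(1) by simp
        have "U \<kappa> x \<in> ?C" "Ug (fst x) \<in> ?C" using c B0 x by auto
        then have "dist (f' (U \<kappa> x)) (f' (Ug (fst x))) < e/2"
          using d(2) c by (auto simp: dist_real_def)
        then show ?thesis unfolding D_def dist_real_def by simp
      qed
      then have "Sup (D \<kappa> ` Iset l) \<le> e/2" using mem0 by (intro cSup_least) auto
      then have "E1 \<kappa> \<le> e/2" unfolding E1_def using elim(2) by simp
      then show ?case using E1(2)[OF elim(2)] e by simp
    qed
  qed
  have etalim: "((\<lambda>\<kappa>. 4*\<eta> \<kappa>) \<longlongrightarrow> 0) (at 0)"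
  proof -
    have "((\<lambda>\<kappa>::real. 4*(\<bar>\<kappa>\<bar>*M*(2+\<bar>\<kappa>\<bar>*M))) \<longlongrightarrow> 4*(\<bar>0\<bar>*M*(2+\<bar>0\<bar>*M))) (at 0)"
      by (intro tendsto_intros)
    then show ?thesis unfolding \<eta>_def by simp
  qed
  have Llim: "(L \<longlongrightarrow> 0) (at 0)"
  proof (rule tendsto_eventually)
    have "eventually (\<lambda>\<kappa>::real. \<bar>\<kappa>\<bar> < 1/(2*M)) (at 0)" unfolding eventually_at
      using M0 by (auto intro!: exI[of _ "1/(2*M)"])
    then show "eventually (\<lambda>\<kappa>. L \<kappa> = 0) (at 0)"
    proof eventually_elim
      case (elim \<kappa>)
      hence "\<bar>\<kappa>\<bar>*M < 1/2" using M0 by (simp add: field_simps)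
      then show ?case unfolding L_def by auto
    qed
  qed
  have lim: "(\<epsilon>2 \<longlongrightarrow> 0) (at 0)"
  proof -
    have "((\<lambda>\<kappa>. max (E1 \<kappa>) (max (4*\<eta> \<kappa>) (L \<kappa>))) \<longlongrightarrow> max 0 (max 0 0)) (at 0)"
      by (intro tendsto_max E1lim etalim Llim)
    then show ?thesis unfolding \<epsilon>2_def by simp
  qed
  have eta0: "0 \<le> \<eta> \<kappa>" for \<kappa> unfolding \<eta>_def using M0 by simp
  have e2eta: "\<eta> \<kappa> \<le> \<epsilon>2 \<kappa>" "4*\<eta> \<kappa> \<le> \<epsilon>2 \<kappa>" "E1 \<kappa> \<le> \<epsilon>2 \<kappa>" "L \<kappa> \<le> \<epsilon>2 \<kappa>" for \<kappa>
    unfolding \<epsilon>2_def using eta0[of \<kappa>] by auto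
  have Lex: "\<exists>e. Q \<kappa> e" if "R \<kappa>" for \<kappa>
  proof -
    have kd0: "0 < \<bar>\<kappa>\<bar> \<and> \<bar>\<kappa>\<bar> \<le> \<delta>0" using that delta1 unfolding R_def by auto
    have pos: "\<forall>x\<in>Iset l. fst (gK l \<Psi> \<kappa>) x > 0" using embedded kd0 by blast
    define G where "G = (\<lambda>p::real\<times>real. ((d1 l \<Psi> (fst p))\<^sup>2 + (\<kappa> * \<Psi> (fst p) * snd p - 1)\<^sup>2)
                                          / (1 + (d1 l \<Psi> (fst p))\<^sup>2))"
    let ?S = "{0..l} \<times> {-1..1::real}"
    have c1: "continuous_on ?S (\<lambda>p. d1 l \<Psi> (fst p))"
      by (rule continuous_on_compose2[OF cd1 continuous_on_fst]) auto
    have c2: "continuous_on ?S (\<lambda>p. \<Psi> (fst p))"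
      by (rule continuous_on_compose2[OF cPsi continuous_on_fst]) auto
    have hz: "1 + z\<^sup>2 \<noteq> (0::real)" for z using add_pos_nonneg[OF zero_less_one zero_le_power2[of z]] by linarith
    have cG: "continuous_on ?S G" unfolding G_def
      by (intro continuous_intros c1 c2) (auto simp: hz)
    obtain p0 where p0: "p0 \<in> ?S" "\<forall>p\<in>?S. G p0 \<le> G p"
      using continuous_attains_inf[OF compact_Times[OF compact_Icc compact_Icc] _ cG] l_pos by auto
    obtain s0 c0 where sc: "p0 = (s0, c0)" by (cases p0)
    have "(s0, arccos c0) \<in> Iset l" using p0 sc unfolding Iset_def by auto
    hence "fst (gK l \<Psi> \<kappa>) (s0, arccos c0) > 0" using pos by blast
    hence "(d1 l \<Psi> s0)\<^sup>2 + (\<kappa> * \<Psi> s0 * c0 - 1)\<^sup>2 > 0" using p0 sc unfolding unf by simp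
    hence m0: "G p0 > 0" unfolding G_def sc by (simp add: add_pos_nonneg)
    define e where "e = 1 / G p0"
    have "Q \<kappa> e" unfolding Q_def
    proof (intro conjI ballI)
      show "0 \<le> e" using m0 e_def by simp
      fix x assume x: "x \<in> Iset l"
      obtain s \<theta> where xs: "x = (s, \<theta>)" by (cases x)
      have s: "s \<in> {0..l}" using x xs Iset_def by auto
      define a where "a = (d1 l \<Psi> s)\<^sup>2"
      define B where "B = a + (\<kappa> * \<Psi> s * cos \<theta> - 1)\<^sup>2"
      have "0 < fst (gK l \<Psi> \<kappa>) (s, \<theta>)" using pos x xs by blast
      hence Bpos: "0 < B" unfolding B_def a_def unf .
      have "G p0 \<le> G (s, cos \<theta>)" using p0(2) s by auto
      hence "G p0 \<le> B / (1 + a)" unfolding G_def B_def a_def by simp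
      hence "G p0 * (1 + a) \<le> B" by (simp add: le_divide_eq add_pos_nonneg a_def)
      hence "1 + a \<le> e * B" using m0 unfolding e_def by (simp add: field_simps)
      hence le: "1 + a \<le> (1+e) * B" using Bpos by (simp add: distrib_right)
      have "(\<phi>s \<kappa> x)\<^sup>2/B + (\<phi>t \<kappa> x)\<^sup>2/(\<Psi> s)\<^sup>2 \<le> (1+e)*((\<phi>s \<kappa> x)\<^sup>2/(1+a) + (\<phi>t \<kappa> x)\<^sup>2/(\<Psi> s)\<^sup>2)"
        by (rule grad_upper_gen) (use Bpos le m0 s Psi_pos a_def e_def in auto)
      then show "gradsq (gK l \<Psi> \<kappa>) (\<phi>s \<kappa>) (\<phi>t \<kappa>) x \<le> (1 + e) * gradsq (gD l \<Psi>) (\<phi>s \<kappa>) (\<phi>t \<kappa>) x"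
        unfolding xs unf a_def B_def by simp
    qed
    then show ?thesis by blast
  qed
  have P1: "\<bar>f' (U \<kappa> x) - f' (Ug (fst x))\<bar> \<le> \<epsilon>2 \<kappa>" if "R \<kappa>" "x \<in> Iset l" for \<kappa> x
    using E1(1)[OF that(1)] that(2) e2eta(3)[of \<kappa>] unfolding D_def by force
  have P23: "((1 - \<epsilon>2 \<kappa>) * dens (gD l \<Psi>) x \<le> dens (gK l \<Psi> \<kappa>) x \<and>
                    dens (gK l \<Psi> \<kappa>) x \<le> (1 + \<epsilon>2 \<kappa>) * dens (gD l \<Psi>) x) \<and>
           ((1 - \<epsilon>2 \<kappa>) * gradsq (gD l \<Psi>) (\<phi>s \<kappa>) (\<phi>t \<kappa>) x
              \<le> gradsq (gK l \<Psi> \<kappa>) (\<phi>s \<kappa>) (\<phi>t \<kappa>) x \<and>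
           gradsq (gK l \<Psi> \<kappa>) (\<phi>s \<kappa>) (\<phi>t \<kappa>) x
              \<le> (1 + \<epsilon>2 \<kappa>) * gradsq (gD l \<Psi>) (\<phi>s \<kappa>) (\<phi>t \<kappa>) x)"
    if Rk: "R \<kappa>" and x: "x \<in> Iset l" for \<kappa> x
  proof -
    have kd0: "0 < \<bar>\<kappa>\<bar> \<and> \<bar>\<kappa>\<bar> \<le> \<delta>0" using Rk delta1 unfolding R_def by auto
    obtain s \<theta> where xs: "x = (s, \<theta>)" by (cases x)
    have s: "s \<in> {0..l}" using x xs Iset_def by auto
    have P: "0 < \<Psi> s" "\<Psi> s \<le> M" using s Psi_pos Mb by auto
    define a where "a = (d1 l \<Psi> s)\<^sup>2"
    define b where "b = \<kappa> * \<Psi> s * cos \<theta> - 1"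
    have a0: "0 \<le> a" unfolding a_def by simp
    have bs: "\<bar>b\<^sup>2 - 1\<bar> \<le> \<eta> \<kappa>" unfolding b_def \<eta>_def
      by (rule bsq) (use P in auto)
    have "0 < fst (gK l \<Psi> \<kappa>) (s, \<theta>)" using embedded kd0 x xs by blast
    hence Bpos: "0 < a + b\<^sup>2" unfolding unf a_def b_def .
    have dD0: "0 \<le> dens (gD l \<Psi>) x" unfolding xs unf using a0 by simp
    have gD0: "0 \<le> gradsq (gD l \<Psi>) (\<phi>s \<kappa>) (\<phi>t \<kappa>) x" unfolding xs unf
      by (intro add_nonneg_nonneg divide_nonneg_pos) (use P(1) in \<open>auto simp: add_pos_nonneg\<close>)
    have dI: "(1-\<eta> \<kappa>) * dens (gD l \<Psi>) x \<le> dens (gK l \<Psi> \<kappa>) x \<and>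
              dens (gK l \<Psi> \<kappa>) x \<le> (1+\<eta> \<kappa>) * dens (gD l \<Psi>) x"
      using dens_ineq[OF a0 P(1) bs] unfolding xs unf a_def b_def by simp
    have gl: "(1-\<eta> \<kappa>) * gradsq (gD l \<Psi>) (\<phi>s \<kappa>) (\<phi>t \<kappa>) x \<le> gradsq (gK l \<Psi> \<kappa>) (\<phi>s \<kappa>) (\<phi>t \<kappa>) x"
      using grad_lower[OF a0 P(1) bs Bpos] unfolding xs unf a_def b_def by simp
    have gu: "gradsq (gK l \<Psi> \<kappa>) (\<phi>s \<kappa>) (\<phi>t \<kappa>) x \<le> (1 + \<epsilon>2 \<kappa>) * gradsq (gD l \<Psi>) (\<phi>s \<kappa>) (\<phi>t \<kappa>) x"
    proof (cases "\<bar>\<kappa>\<bar>*M > 1/2")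
      case True
      have "Q \<kappa> (L \<kappa>)" unfolding L_def using True Rk someI_ex[OF Lex[OF Rk]] by simp
      then have "gradsq (gK l \<Psi> \<kappa>) (\<phi>s \<kappa>) (\<phi>t \<kappa>) x \<le> (1 + L \<kappa>) * gradsq (gD l \<Psi>) (\<phi>s \<kappa>) (\<phi>t \<kappa>) x"
        unfolding Q_def using x by blast
      then show ?thesis using mono_hi[OF gD0 e2eta(4)] by blast
    next
      case False
      have sm: "1 + a \<le> (1 + 4*\<eta> \<kappa>)*(a + b\<^sup>2)" unfolding \<eta>_def a_def b_def
        by (rule small_case) (use P False in auto)
      have "(\<phi>s \<kappa> x)\<^sup>2/(a+b\<^sup>2) + (\<phi>t \<kappa> x)\<^sup>2/(\<Psi> s)\<^sup>2 \<le> (1+4*\<eta> \<kappa>)*((\<phi>s \<kappa> x)\<^sup>2/(1+a) + (\<phi>t \<kappa> x)\<^sup>2/(\<Psi> s)\<^sup>2)"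
        by (rule grad_upper_gen) (use Bpos sm P a0 eta0[of \<kappa>] in auto)
      then have "gradsq (gK l \<Psi> \<kappa>) (\<phi>s \<kappa>) (\<phi>t \<kappa>) x \<le> (1 + 4*\<eta> \<kappa>) * gradsq (gD l \<Psi>) (\<phi>s \<kappa>) (\<phi>t \<kappa>) x"
        unfolding xs unf a_def b_def by simp
      then show ?thesis using mono_hi[OF gD0 e2eta(2)] by blast
    qed
    show ?thesis using dI gl gu mono_lo[OF dD0 e2eta(1)] mono_hi[OF dD0 e2eta(1)]
      mono_lo[OF gD0 e2eta(1)] by blast
  qed
  show ?thesis
    apply (rule exI[of _ \<epsilon>2])
    using lim P1 P23 unfolding R_def by blast
qed

end
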